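(* Let $E$ be a real Hilbert space with $\dim(E)\ge 2$, let $h\in E$ be a unit vector, and let $f:\mathbb{R}_{\ge0}\to\mathbb{R}_{\ge0}$ satisfy $f(d)>0$ if and only if $d>0$. Define $C_f=\{x\in E\mid f(\|x_\perp\|)\le x_h\}$ and the relation $x\preceq_f y \iff y-x\in C_f$ on $E$. (a) If $\dim(E)\ge 3$, then $(E,\preceq_f)$ is a cc sponge if and only if the relation $\preceq_f$ is topologically closed (as a subset of $E\times E$) and $f$ is square-superadditive. (b) If $\dim(E)=2$ and the relation $\preceq_f$ is topologically closed, then $(E,\preceq_f)$ is a cc sponge if and only if $f$ is superadditive.
   Context: For $x\in E$ write $x=x_h h+x_\perp$ with $x_h=(x,h)\in\mathbb{R}$ and $x_\perp$ orthogonal to $h$. An orientation on a set $S$ is a reflexive, antisymmetric binary relation $\preceq$. For $P,Q\subseteq S$, $P\preceq Q$ means $p\preceq q$ for all $p\in P,q\in Q$. $P$ is right-bounded if $P\preceq\{s\}$ for some $s\in S$. An element $x$ is the join of $P$ if $P\preceq\{x\}$ and for all $y\in S$ with $P\preceq\{y\}$ we have $x\preceq y$. An oriented set $(S,\preceq)$ is a conditionally complete sponge (cc sponge) if every nonempty right-bounded subset of $S$ has a join. A function $f:\mathbb{R}_{\ge0}\to\mathbb{R}_{\ge0}$ is superadditive if $f(x+y)\ge f(x)+f(y)$ for all $x,y\ge0$, and square-superadditive if $f(\sqrt{x^2+y^2})\ge f(x)+f(y)$ for all $x,y\ge 0$. *)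

theory Defs
  imports "HOL-Analysis.Analysis"
begin

definition orientation :: "('a \<Rightarrow> 'a \<Rightarrow> bool) \<Rightarrow> bool" where
  "orientation le \<longleftrightarrow> (\<forall>x. le x x) \<and> (\<forall>x y. le x y \<and> le y x \<longrightarrow> x = y)"

definition set_le :: "('a \<Rightarrow> 'a \<Rightarrow> bool) \<Rightarrow> 'a set \<Rightarrow> 'a set \<Rightarrow> bool" where
  "set_le le P Q \<longleftrightarrow> (\<forall>p\<in>P. \<forall>q\<in>Q. le p q)"

definition right_bounded :: "('a \<Rightarrow> 'a \<Rightarrow> bool) \<Rightarrow> 'a set \<Rightarrow> bool" where
  "right_bounded le P \<longleftrightarrow> (\<exists>s. set_le le P {s})"

definition is_join :: "('a \<Rightarrow> 'a \<Rightarrow> bool) \<Rightarrow> 'a set \<Rightarrow> 'a \<Rightarrow> bool" where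
  "is_join le P x \<longleftrightarrow> set_le le P {x} \<and> (\<forall>y. set_le le P {y} \<longrightarrow> le x y)"

definition cc_sponge :: "('a \<Rightarrow> 'a \<Rightarrow> bool) \<Rightarrow> bool" where
  "cc_sponge le \<longleftrightarrow> orientation le \<and>
     (\<forall>P. P \<noteq> {} \<and> right_bounded le P \<longrightarrow> (\<exists>x. is_join le P x))"

(* functions on R_{\<ge>0}, represented as real \<Rightarrow> real, only values on [0,\<infinity>) matter *)
definition superadditive :: "(real \<Rightarrow> real) \<Rightarrow> bool" where
  "superadditive f \<longleftrightarrow> (\<forall>x y. x \<ge> 0 \<longrightarrow> y \<ge> 0 \<longrightarrow> f (x + y) \<ge> f x + f y)"

definition square_superadditive :: "(real \<Rightarrow> real) \<Rightarrow> bool" where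
  "square_superadditive f \<longleftrightarrow>
     (\<forall>x y. x \<ge> 0 \<longrightarrow> y \<ge> 0 \<longrightarrow> f (sqrt (x\<^sup>2 + y\<^sup>2)) \<ge> f x + f y)"

(* x_h = x \<bullet> h and x_perp = x - (x \<bullet> h) h *)
definition cone_f :: "(real \<Rightarrow> real) \<Rightarrow> 'a::real_inner \<Rightarrow> 'a set" where
  "cone_f f h = {x. f (norm (x - (x \<bullet> h) *\<^sub>R h)) \<le> x \<bullet> h}"

definition rel_f :: "(real \<Rightarrow> real) \<Rightarrow> 'a::real_inner \<Rightarrow> 'a \<Rightarrow> 'a \<Rightarrow> bool" where
  "rel_f f h x y \<longleftrightarrow> y - x \<in> cone_f f h"

(* dim(E) \<ge> n, allowing infinite dimension *)
definition dim_ge :: "'a::real_vector itself \<Rightarrow> nat \<Rightarrow> bool" where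
  "dim_ge (TYPE('a)) n \<longleftrightarrow> (\<exists>B::'a set. independent B \<and> finite B \<and> card B = n)"

end

theory Submission
  imports Defs
begin

definition prj :: "'a::real_inner \<Rightarrow> 'a \<Rightarrow> 'a" where "prj h x = x - (x \<bullet> h) *\<^sub>R h"

lemma cone_iff: "x \<in> cone_f f h \<longleftrightarrow> f (norm (prj h x)) \<le> x \<bullet> h"
  by (simp add: cone_f_def prj_def)

lemma hh: "norm h = 1 \<Longrightarrow> h \<bullet> h = 1"
  by (metis norm_eq_sqrt_inner real_sqrt_eq_1_iff)

lemma prj_h: "norm h = 1 \<Longrightarrow> prj h x \<bullet> h = 0"
  by (simp add: prj_def inner_diff_left hh)

lemma prj_decomp: "x = (x \<bullet> h) *\<^sub>R h + prj h x" by (simp add: prj_def)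

lemma prj_diff: "prj h (x - y) = prj h x - prj h y"
  by (simp add: prj_def inner_diff_left algebra_simps)

lemma inner_comb: "norm h = 1 \<Longrightarrow> v \<bullet> h = 0 \<Longrightarrow> (t *\<^sub>R h + v) \<bullet> h = t"
  by (simp add: inner_add_left hh)

lemma prj_comb: "norm h = 1 \<Longrightarrow> v \<bullet> h = 0 \<Longrightarrow> prj h (t *\<^sub>R h + v) = v"
  by (simp add: prj_def inner_comb)

lemma cone_comb: "norm h = 1 \<Longrightarrow> v \<bullet> h = 0 \<Longrightarrow> t *\<^sub>R h + v \<in> cone_f f h \<longleftrightarrow> f (norm v) \<le> t"
  by (simp add: cone_iff prj_comb inner_comb)


lemma cone_diff: "z - p \<in> cone_f f h \<longleftrightarrow> f (norm (prj h z - prj h p)) \<le> z \<bullet> h - p \<bullet> h"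
  by (simp add: cone_iff prj_diff inner_diff_left)

lemma prj_orth: "v \<bullet> h = 0 \<Longrightarrow> prj h v = v" by (simp add: prj_def)
lemma prj_add: "prj h (x + y) = prj h x + prj h y" by (simp add: prj_def inner_add_left algebra_simps)
lemma prj_scale: "prj h (c *\<^sub>R x) = c *\<^sub>R prj h x" by (simp add: prj_def algebra_simps)
lemma prj_self: "norm h = 1 \<Longrightarrow> prj h h = 0" by (simp add: prj_def hh)
lemma prj_minus: "prj h (- x) = - prj h x" by (simp add: prj_def)
lemma prj_zero: "prj h 0 = 0" by (simp add: prj_def)

lemma nec_Q:
  fixes h e v :: "'a::real_inner" and f :: "real \<Rightarrow> real"
  assumes cc: "cc_sponge (rel_f f h)" and unit: "norm h = 1" and e: "norm e = 1" "e \<bullet> h = 0"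
    and fpos: "\<And>d. d > 0 \<Longrightarrow> f d > 0"
    and vh: "v \<bullet> h = 0" and r: "r \<ge> 0"
  shows "f (norm v) + f r \<le> max (f (norm (v - r *\<^sub>R e))) (f (norm (v + r *\<^sub>R e)))"
proof -
  let ?C = "cone_f f h"
  let ?le = "rel_f f h"
  define P where "P = {r *\<^sub>R e, - (r *\<^sub>R e)}"
  have eh: "(r *\<^sub>R e) \<bullet> h = 0" using e by simp
  have pe: "prj h (r *\<^sub>R e) = r *\<^sub>R e" using eh by (rule prj_orth)
  have ub: "set_le ?le P {z} \<longleftrightarrow> f (norm (prj h z - r *\<^sub>R e)) \<le> z \<bullet> h \<and> f (norm (prj h z + r *\<^sub>R e)) \<le> z \<bullet> h" for z
    by (simp add: set_le_def rel_f_def P_def cone_diff pe prj_minus eh e(2))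
  define s0 where "s0 = f r *\<^sub>R h"
  have "prj h s0 = 0" "s0 \<bullet> h = f r" by (simp_all add: s0_def prj_scale prj_self unit hh)
  hence "set_le ?le P {s0}" using ub e r by simp
  hence "right_bounded ?le P" by (auto simp: right_bounded_def)
  moreover have "P \<noteq> {}" by (simp add: P_def)
  ultimately obtain x where x: "is_join ?le P x" using cc by (auto simp: cc_sponge_def)
  define \<mu> where "\<mu> = x \<bullet> h"
  define w where "w = prj h x"
  have wh: "w \<bullet> h = 0" by (simp add: w_def prj_h unit)
  have xub: "set_le ?le P {x}" using x by (simp add: is_join_def)
  hence A: "f (norm (w - r *\<^sub>R e)) \<le> \<mu>" "f (norm (w + r *\<^sub>R e)) \<le> \<mu>" using ub w_def \<mu>_def by auto
  define x' where "x' = \<mu> *\<^sub>R h - w"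
  have x'p: "prj h x' = - w" "x' \<bullet> h = \<mu>"
    by (simp_all add: x'_def prj_diff prj_scale prj_self unit prj_orth wh inner_diff_left hh)
  have "norm (- w - r *\<^sub>R e) = norm (w + r *\<^sub>R e)" "norm (- w + r *\<^sub>R e) = norm (w - r *\<^sub>R e)"
  proof -
    have "- w - r *\<^sub>R e = - (w + r *\<^sub>R e)" "- w + r *\<^sub>R e = - (w - r *\<^sub>R e)" by simp_all
    then show "norm (- w - r *\<^sub>R e) = norm (w + r *\<^sub>R e)" "norm (- w + r *\<^sub>R e) = norm (w - r *\<^sub>R e)"
      by (simp_all only: norm_minus_cancel)
  qed
  hence "set_le ?le P {x'}" using ub x'p A by simp
  hence "rel_f f h x x'" using x by (simp add: is_join_def)
  hence "f (norm (- w - w)) \<le> 0" using x'p by (simp add: rel_f_def cone_diff w_def \<mu>_def)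
  moreover have "norm (- w - w) = 2 * norm w"
  proof -
    have "- w - w = - (2 *\<^sub>R w)" by (simp add: scaleR_2)
    then show ?thesis by (simp only: norm_minus_cancel) simp
  qed
  ultimately have "f (2 * norm w) \<le> 0" by simp
  hence "2 * norm w = 0" using fpos[of "2 * norm w"] by force
  hence w0: "w = 0" by simp
  have fr: "f r \<le> \<mu>" using A w0 e r by simp
  define F where "F = max (f (norm (v - r *\<^sub>R e))) (f (norm (v + r *\<^sub>R e)))"
  define y where "y = F *\<^sub>R h + v"
  have yp: "prj h y = v" "y \<bullet> h = F" by (simp_all add: y_def prj_comb inner_comb unit vh)
  have "set_le ?le P {y}" using ub yp F_def by simp
  hence "rel_f f h x y" using x by (simp add: is_join_def)
  hence "f (norm v) \<le> F - \<mu>" using yp w0 by (simp add: rel_f_def cone_diff w_def \<mu>_def)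
  thus ?thesis using fr F_def by simp
qed


lemma suff:
  fixes h :: "'a::{real_inner,complete_space}" and f :: "real \<Rightarrow> real"
  assumes unit: "norm h = 1" and f0: "f 0 = 0" and fpos: "\<And>d. d > 0 \<Longrightarrow> f d > 0"
    and mono: "\<And>a b. 0 \<le> a \<Longrightarrow> a \<le> b \<Longrightarrow> f a \<le> f b"
    and K: "\<And>a u. a \<bullet> h = 0 \<Longrightarrow> u \<bullet> h = 0 \<Longrightarrow> a \<bullet> u \<ge> 0 \<Longrightarrow> f (norm a) + f (norm u) \<le> f (norm (a + u))"
    and cl: "closed (cone_f f h)"
  shows "cc_sponge (rel_f f h)"
proof -
  let ?C = "cone_f f h"
  have fnn: "\<And>d. d \<ge> 0 \<Longrightarrow> f d \<ge> 0" using mono[of 0] f0 by fastforce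
  have orient: "orientation (rel_f f h)"
    unfolding orientation_def rel_f_def
  proof (intro conjI allI impI)
    fix x :: 'a show "x - x \<in> ?C" by (simp add: cone_iff prj_def f0)
  next
    fix x y :: 'a assume a: "y - x \<in> ?C \<and> x - y \<in> ?C"
    define z where "z = y - x"
    have 1: "f (norm (prj h z)) \<le> z \<bullet> h" using a by (simp add: cone_iff z_def)
    have "prj h (x - y) = - prj h z" using prj_diff[of h x y] prj_diff[of h y x] by (simp add: z_def)
    hence 2: "f (norm (prj h z)) \<le> - (z \<bullet> h)" using a by (simp add: cone_iff z_def inner_diff_left)
    have "f (norm (prj h z)) \<ge> 0" by (simp add: fnn)
    hence zh: "z \<bullet> h = 0" and "f (norm (prj h z)) \<le> 0" using 1 2 by linarith+
    hence "norm (prj h z) = 0" using fpos[of "norm (prj h z)"] by force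
    hence "prj h z = 0" by simp
    hence "z = 0" using prj_decomp[of z h] zh by simp
    thus "x = y" by (simp add: z_def)
  qed
  have "\<exists>x. is_join (rel_f f h) P x" if Pne: "P \<noteq> {}" and Pb: "right_bounded (rel_f f h) P" for P
  proof -
    define U where "U = {y. \<forall>p\<in>P. y - p \<in> ?C}"
    have Uiff: "set_le (rel_f f h) P {y} \<longleftrightarrow> y \<in> U" for y by (simp add: set_le_def rel_f_def U_def)
    obtain s0 where s0: "s0 \<in> U" using Pb unfolding right_bounded_def Uiff by blast
    obtain p0 where p0: "p0 \<in> P" using Pne by auto
    have lowb: "p0 \<bullet> h \<le> y \<bullet> h" if "y \<in> U" for y
    proof -
      have "y - p0 \<in> ?C" using that p0 U_def by auto
      hence "f (norm (prj h (y - p0))) \<le> (y - p0) \<bullet> h" by (simp add: cone_iff)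
      moreover have "f (norm (prj h (y - p0))) \<ge> 0" by (simp add: fnn)
      ultimately show ?thesis by (simp add: inner_diff_left)
    qed
    have WML: "s *\<^sub>R h + ((1-lam) *\<^sub>R prj h y1 + lam *\<^sub>R prj h y2) \<in> U"
      if y1: "y1 \<in> U" and y2: "y2 \<in> U" and l0: "0 \<le> lam" and l1: "lam \<le> 1"
        and s1: "y1 \<bullet> h - f (lam * norm (prj h y1 - prj h y2)) \<le> s"
        and s2: "y2 \<bullet> h - f ((1-lam) * norm (prj h y1 - prj h y2)) \<le> s" for y1 y2 lam s
    proof -
      define z where "z = (1-lam) *\<^sub>R prj h y1 + lam *\<^sub>R prj h y2"
      have zh: "z \<bullet> h = 0" by (simp add: z_def inner_add_left prj_h unit)
      have "s *\<^sub>R h + z - p \<in> ?C" if p: "p \<in> P" for p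
      proof -
        define a where "a = z - prj h p"
        have ah: "a \<bullet> h = 0" by (simp add: a_def inner_diff_left zh prj_h unit)
        have eq: "s *\<^sub>R h + z - p = (s - p \<bullet> h) *\<^sub>R h + a"
          using prj_decomp[of p h] by (simp add: a_def prj_def algebra_simps)
        have "f (norm a) \<le> s - p \<bullet> h"
        proof (cases "a \<bullet> (prj h y1 - prj h y2) \<ge> 0")
          case True
          define u where "u = lam *\<^sub>R (prj h y1 - prj h y2)"
          have uh: "u \<bullet> h = 0" by (simp add: u_def inner_diff_left prj_h unit)
          have au: "a \<bullet> u \<ge> 0" using True l0 by (simp add: u_def)
          have au2: "a + u = prj h (y1 - p)" by (simp add: a_def u_def z_def prj_diff algebra_simps)
          have "y1 - p \<in> ?C" using y1 p U_def by auto
          hence "f (norm (prj h (y1 - p))) \<le> y1 \<bullet> h - p \<bullet> h" by (simp add: cone_iff inner_diff_left)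
          moreover have "norm u = lam * norm (prj h y1 - prj h y2)" using l0 by (simp add: u_def)
          ultimately show ?thesis using K[OF ah uh au] au2 s1 by simp
        next
          case False
          define u where "u = (1-lam) *\<^sub>R (prj h y2 - prj h y1)"
          have uh: "u \<bullet> h = 0" by (simp add: u_def inner_diff_left prj_h unit)
          have "a \<bullet> (prj h y2 - prj h y1) = - (a \<bullet> (prj h y1 - prj h y2))" by (simp add: inner_diff_right)
          hence au: "a \<bullet> u \<ge> 0" using False l1 by (simp add: u_def mult_nonneg_nonpos)
          have au2: "a + u = prj h (y2 - p)" by (simp add: a_def u_def z_def prj_diff algebra_simps)
          have "y2 - p \<in> ?C" using y2 p U_def by auto
          hence "f (norm (prj h (y2 - p))) \<le> y2 \<bullet> h - p \<bullet> h" by (simp add: cone_iff inner_diff_left)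
          moreover have "norm u = (1-lam) * norm (prj h y1 - prj h y2)" using l1
            by (simp add: u_def norm_minus_commute)
          ultimately show ?thesis using K[OF ah uh au] au2 s2 by simp
        qed
        thus ?thesis using eq cone_comb[OF unit ah] by simp
      qed
      thus ?thesis by (simp add: U_def z_def add.assoc)
    qed
    define \<mu> where "\<mu> = Inf ((\<lambda>y. y \<bullet> h) ` U)"
    have Une: "U \<noteq> {}" using s0 by auto
    have bdd: "bdd_below ((\<lambda>y. y \<bullet> h) ` U)" using lowb by (rule bdd_belowI2)
    have mule: "\<mu> \<le> y \<bullet> h" if "y \<in> U" for y unfolding \<mu>_def using bdd that by (simp add: cInf_lower)
    have inU: "\<mu> \<le> s" if "s *\<^sub>R h + z \<in> U" "z \<bullet> h = 0" for s z
      using mule[OF that(1)] inner_comb[OF unit that(2)] by simp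
    have "\<forall>n. \<exists>y\<in>U. y \<bullet> h < \<mu> + inverse (real (Suc n))"
    proof
      fix n
      have "\<mu> < \<mu> + inverse (real (Suc n))" by simp
      then have "Inf ((\<lambda>y. y \<bullet> h) ` U) < \<mu> + inverse (real (Suc n))" by (simp add: \<mu>_def)
      then show "\<exists>y\<in>U. y \<bullet> h < \<mu> + inverse (real (Suc n))"
        using cInf_less_iff[OF _ bdd] Une by (metis (no_types, lifting) empty_is_image imageE)
    qed
    then obtain Y where Y: "\<And>n. Y n \<in> U" "\<And>n. Y n \<bullet> h < \<mu> + inverse (real (Suc n))" by metis
    define v where "v n = prj h (Y n)" for n
    have Cv: "Cauchy v"
    proof (rule metric_CauchyI)
      fix e :: real assume e: "e > 0"
      have fe: "f (e/2) > 0" using fpos e by simp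
      obtain N where N: "inverse (real (Suc N)) < f (e/2)" using reals_Archimedean[OF fe] by blast
      show "\<exists>M. \<forall>m\<ge>M. \<forall>n\<ge>M. dist (v m) (v n) < e"
      proof (intro exI allI impI)
        fix m n assume m: "N \<le> m" and n: "N \<le> n"
        define d where "d = norm (prj h (Y m) - prj h (Y n))"
        define s where "s = max (Y m \<bullet> h) (Y n \<bullet> h) - f (1/2 * d)"
        have "s *\<^sub>R h + ((1 - 1/2) *\<^sub>R prj h (Y m) + (1/2) *\<^sub>R prj h (Y n)) \<in> U"
          by (rule WML[OF Y(1) Y(1)]) (auto simp: s_def d_def)
        hence "\<mu> \<le> s" by (rule inU) (simp add: inner_add_left prj_h unit)
        hence 1: "f (d/2) \<le> max (Y m \<bullet> h) (Y n \<bullet> h) - \<mu>" by (simp add: s_def)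
        have "inverse (real (Suc m)) \<le> inverse (real (Suc N))" "inverse (real (Suc n)) \<le> inverse (real (Suc N))"
          using m n by (auto intro!: le_imp_inverse_le)
        hence "max (Y m \<bullet> h) (Y n \<bullet> h) - \<mu> < inverse (real (Suc N))"
          using Y(2)[of m] Y(2)[of n] by linarith
        hence "f (d/2) < f (e/2)" using N 1 by linarith
        hence "d < e" using mono[of "e/2" "d/2"] e by (cases "d < e") auto
        thus "dist (v m) (v n) < e" by (simp add: v_def d_def dist_norm)
      qed
    qed
    obtain w where vw: "v \<longlonglongrightarrow> w" using Cv Cauchy_convergent convergent_def by blast
    have wh: "w \<bullet> h = 0"
    proof -
      have "(\<lambda>n. v n \<bullet> h) \<longlonglongrightarrow> w \<bullet> h" by (intro tendsto_intros vw)
      moreover have "(\<lambda>n. v n \<bullet> h) = (\<lambda>n. 0)" by (simp add: v_def prj_h unit)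
      ultimately show ?thesis using LIMSEQ_unique tendsto_const by metis
    qed
    have tmu: "(\<lambda>n. Y n \<bullet> h) \<longlonglongrightarrow> \<mu>"
    proof (rule tendsto_sandwich[of "\<lambda>n. \<mu>" _ sequentially "\<lambda>n. \<mu> + inverse (real (Suc n))"])
      show "eventually (\<lambda>n. \<mu> \<le> Y n \<bullet> h) sequentially" using mule Y(1) by simp
      show "eventually (\<lambda>n. Y n \<bullet> h \<le> \<mu> + inverse (real (Suc n))) sequentially"
        using Y(2) less_imp_le by (intro always_eventually allI) blast
      show "(\<lambda>n. \<mu>) \<longlonglongrightarrow> \<mu>" by simp
      show "(\<lambda>n. \<mu> + inverse (real (Suc n))) \<longlonglongrightarrow> \<mu>"
        using tendsto_add[OF tendsto_const LIMSEQ_inverse_real_of_nat, of \<mu>] by simp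
    qed
    define x where "x = \<mu> *\<^sub>R h + w"
    have Yx: "Y \<longlonglongrightarrow> x"
    proof -
      have "(\<lambda>n. (Y n \<bullet> h) *\<^sub>R h + v n) \<longlonglongrightarrow> x" unfolding x_def by (intro tendsto_intros tmu vw)
      moreover have "(\<lambda>n. (Y n \<bullet> h) *\<^sub>R h + v n) = Y" by (auto simp: v_def fun_eq_iff prj_def)
      ultimately show ?thesis by simp
    qed
    have Ucl: "closed U"
    proof -
      have "U = (\<Inter>p\<in>P. (\<lambda>y. y - p) -` ?C)" by (auto simp: U_def)
      moreover have "closed ((\<lambda>y. y - p) -` ?C)" for p
        by (rule continuous_closed_vimage[OF cl]) (intro continuous_intros)
      ultimately show ?thesis by auto
    qed
    have xU: "x \<in> U" using Ucl Y(1) Yx closed_sequential_limits by blast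
    have xh: "x \<bullet> h = \<mu>" and xp: "prj h x = w" using inner_comb[OF unit wh] prj_comb[OF unit wh] x_def by auto
    have "is_join (rel_f f h) P x"
      unfolding is_join_def
    proof (intro conjI allI impI)
      show "set_le (rel_f f h) P {x}" using xU Uiff by simp
      fix y assume "set_le (rel_f f h) P {y}"
      hence yU: "y \<in> U" using Uiff by simp
      define t where "t = y \<bullet> h"
      define d where "d = norm (prj h y - w)"
      have tmu: "\<mu> \<le> t" using mule yU t_def by simp
      have pyh: "(prj h y - w) \<bullet> h = 0" by (simp add: inner_diff_left prj_h unit wh)
      have yx: "y - x = (t - \<mu>) *\<^sub>R h + (prj h y - w)"
        by (simp add: x_def t_def prj_def algebra_simps)
      have key: "f r \<le> t - \<mu>" if r0: "0 \<le> r" and rd: "r < d" for r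
      proof -
        define lam where "lam = 1 - r/d"
        have dpos: "d > 0" using r0 rd by simp
        have l0: "0 \<le> lam" "lam \<le> 1" using r0 rd dpos by (auto simp: lam_def field_simps)
        have ld: "lam * d = d - r" "(1 - lam) * d = r" using dpos by (auto simp: lam_def field_simps)
        have dd: "norm (prj h x - prj h y) = d" by (simp add: xp d_def norm_minus_commute)
        define s where "s = max (\<mu> - f (d - r)) (t - f r)"
        have "s *\<^sub>R h + ((1-lam) *\<^sub>R prj h x + lam *\<^sub>R prj h y) \<in> U"
          by (rule WML[OF xU yU l0]) (auto simp: dd ld xh t_def s_def)
        hence "\<mu> \<le> s" by (rule inU) (simp add: inner_add_left prj_h unit)
        moreover have "f (d - r) > 0" using fpos rd by simp
        ultimately show ?thesis by (auto simp: s_def)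
      qed
      show "rel_f f h x y"
      proof (cases "d = 0")
        case True
        then show ?thesis unfolding rel_f_def yx cone_comb[OF unit pyh]
          using tmu f0 by (simp add: d_def)
      next
        case False
        hence dpos: "d > 0" by (simp add: d_def)
        define c where "c n = 1 - inverse (real (Suc n))" for n
        define q where "q n = (t - \<mu>) *\<^sub>R h + c n *\<^sub>R (prj h y - w)" for n
        have cn: "0 \<le> c n" "c n < 1" for n by (auto simp: c_def field_simps)
        have "q n \<in> ?C" for n
        proof -
          have h0: "(c n *\<^sub>R (prj h y - w)) \<bullet> h = 0" using pyh by simp
          have "norm (c n *\<^sub>R (prj h y - w)) = c n * d" using cn by (simp add: d_def)
          moreover have "c n * d < d" using cn dpos by simp
          ultimately show ?thesis unfolding q_def cone_comb[OF unit h0]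
            using key[of "c n * d"] cn dpos d_def by simp
        qed
        moreover have "q \<longlonglongrightarrow> (t - \<mu>) *\<^sub>R h + 1 *\<^sub>R (prj h y - w)"
        proof -
          have "c \<longlonglongrightarrow> 1 - 0" unfolding c_def by (intro tendsto_intros LIMSEQ_inverse_real_of_nat)
          then show ?thesis unfolding q_def by (intro tendsto_intros) simp
        qed
        ultimately have "(t - \<mu>) *\<^sub>R h + 1 *\<^sub>R (prj h y - w) \<in> ?C"
          using cl closed_sequential_limits by blast
        thus ?thesis by (simp add: rel_f_def yx)
      qed
    qed
    thus ?thesis by blast
  qed
  thus ?thesis using orient by (simp add: cc_sponge_def)
qed

lemma nec_closed:
  fixes h e :: "'a::real_inner" and f :: "real \<Rightarrow> real"
  assumes cc: "cc_sponge (rel_f f h)" and unit: "norm h = 1" and e: "norm e = 1" "e \<bullet> h = 0"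
    and f0: "f 0 = 0" and fnn: "\<And>d. d \<ge> 0 \<Longrightarrow> f d \<ge> 0"
    and smono: "\<And>a b. 0 \<le> a \<Longrightarrow> a < b \<Longrightarrow> f a < f b"
  shows "closed (cone_f f h)"
proof -
  let ?C = "cone_f f h"
  let ?le = "rel_f f h"
  have mono: "f a \<le> f b" if "0 \<le> a" "a \<le> b" for a b
    using smono[of a b] that by (cases "a = b") auto
  have LC: "\<exists>s. 0 \<le> s \<and> s < d \<and> c < f s" if d: "d > 0" and c: "c < f d" for d c
  proof (rule ccontr)
    assume "\<not> ?thesis"
    hence below: "\<And>s. 0 \<le> s \<Longrightarrow> s < d \<Longrightarrow> f s \<le> c" by force
    define R where "R = Inf (f ` {0<..})"
    have bddR: "bdd_below (f ` {0<..})" using fnn by (intro bdd_belowI2[of _ 0]) simp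
    have Rle: "R \<le> f s" if "s > 0" for s using cInf_lower[OF _ bddR] that R_def by auto
    define \<kappa> where "\<kappa> = c - R"
    define q where "q = \<kappa> *\<^sub>R h + d *\<^sub>R e"
    define P where "P = {0, q}"
    have deh: "(d *\<^sub>R e) \<bullet> h = 0" using e by simp
    have pq: "prj h q = d *\<^sub>R e" "q \<bullet> h = \<kappa>"
      using prj_comb[OF unit deh] inner_comb[OF unit deh] by (simp_all add: q_def)
    have ub: "set_le ?le P {z} \<longleftrightarrow> f (norm (prj h z)) \<le> z \<bullet> h \<and> f (norm (prj h z - d *\<^sub>R e)) \<le> z \<bullet> h - \<kappa>" for z
    proof -
      have 1: "z - q \<in> ?C \<longleftrightarrow> f (norm (prj h z - d *\<^sub>R e)) \<le> z \<bullet> h - \<kappa>" by (simp add: cone_diff pq)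
      have 2: "z \<in> ?C \<longleftrightarrow> f (norm (prj h z)) \<le> z \<bullet> h" by (simp add: cone_iff)
      show ?thesis unfolding set_le_def rel_f_def P_def using 1 2 by simp
    qed
    define M where "M = max 0 (\<kappa> + f d)"
    define s0 where "s0 = M *\<^sub>R h"
    have "prj h s0 = 0" "s0 \<bullet> h = M" by (simp_all add: s0_def prj_scale prj_self unit hh)
    moreover have "norm (- (d *\<^sub>R e)) = d" using e d by simp
    ultimately have "set_le ?le P {s0}" using ub f0 by (simp add: M_def)
    hence "right_bounded ?le P" by (auto simp: right_bounded_def)
    moreover have "P \<noteq> {}" by (simp add: P_def)
    ultimately obtain x where x: "is_join ?le P x" using cc by (auto simp: cc_sponge_def)
    define \<mu> where "\<mu> = x \<bullet> h"
    define w where "w = prj h x"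
    have xub: "set_le ?le P {x}" using x by (simp add: is_join_def)
    hence A1: "f (norm w) \<le> \<mu>" and A2: "f (norm (w - d *\<^sub>R e)) \<le> \<mu> - \<kappa>" using ub w_def \<mu>_def by auto
    have mu: "\<mu> > c"
    proof (cases "norm w \<ge> d")
      case True
      then show ?thesis using mono[of d "norm w"] d c A1 by simp
    next
      case False
      define s1 where "s1 = norm (w - d *\<^sub>R e)"
      have "d - norm w \<le> norm (d *\<^sub>R e - w)" using norm_triangle_ineq2[of "d *\<^sub>R e" w] e d by simp
      hence s1pos: "s1 > 0" using False unfolding s1_def norm_minus_commute[of w] by linarith
      have "f (s1/2) < f s1" using smono[of "s1/2" s1] s1pos by simp
      moreover have "R \<le> f (s1/2)" using Rle s1pos by simp
      ultimately show ?thesis using A2 s1_def \<kappa>_def by simp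
    qed
    define \<epsilon> where "\<epsilon> = \<mu> - c"
    have epos: "\<epsilon> > 0" using mu \<epsilon>_def by simp
    have "Inf (f ` {0<..}) < R + \<epsilon>" using epos R_def by simp
    then obtain s2 where s2: "s2 > 0" "f s2 < R + \<epsilon>"
      using cInf_less_iff[OF _ bddR] by auto
    define s3 where "s3 = min s2 d"
    have s3: "0 < s3" "s3 \<le> d" "f s3 \<le> f s2" using s2 d mono[of s3 s2] by (auto simp: s3_def)
    define vv where "vv = (d - s3) *\<^sub>R e"
    define T where "T = max c (\<kappa> + f s3)"
    define y where "y = T *\<^sub>R h + vv"
    have vvh: "vv \<bullet> h = 0" using e by (simp add: vv_def)
    have yp: "prj h y = vv" "y \<bullet> h = T" by (simp_all add: y_def prj_comb inner_comb unit vvh)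
    have n1: "norm vv = d - s3" using e s3 by (simp add: vv_def)
    have "vv - d *\<^sub>R e = - (s3 *\<^sub>R e)" by (simp add: vv_def algebra_simps)
    hence n2: "norm (vv - d *\<^sub>R e) = s3" using e s3 by simp
    have "f (d - s3) \<le> c" using below[of "d - s3"] s3 by simp
    hence "f (d - s3) \<le> T" "f s3 \<le> T - \<kappa>" by (simp_all add: T_def)
    hence "set_le ?le P {y}" using ub yp n1 n2 by simp
    hence "rel_f f h x y" using x by (simp add: is_join_def)
    hence "f (norm (vv - w)) \<le> T - \<mu>" using yp by (simp add: rel_f_def cone_diff w_def \<mu>_def)
    moreover have "f (norm (vv - w)) \<ge> 0" using fnn by simp
    moreover have "T < \<mu>" using mu s2 s3 \<epsilon>_def \<kappa>_def T_def by simp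
    ultimately show False by simp
  qed
  show ?thesis unfolding closed_sequential_limits
  proof (intro allI impI, elim conjE)
    fix z l assume zC: "\<forall>n. z n \<in> ?C" and zl: "z \<longlonglongrightarrow> l"
    have th: "(\<lambda>n. z n \<bullet> h) \<longlonglongrightarrow> l \<bullet> h" by (intro tendsto_intros zl)
    have pn: "(\<lambda>n. norm (prj h (z n))) \<longlonglongrightarrow> norm (prj h l)"
      unfolding prj_def by (intro tendsto_intros zl)
    have zn: "f (norm (prj h (z n))) \<le> z n \<bullet> h" for n using zC by (simp add: cone_iff)
    show "l \<in> ?C"
    proof (cases "norm (prj h l) = 0")
      case True
      have "0 \<le> l \<bullet> h"
      proof (rule tendsto_lowerbound[OF th])
        have "0 \<le> z n \<bullet> h" for n using zn[of n] fnn[of "norm (prj h (z n))"] by simp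
        then show "\<forall>\<^sub>F n in sequentially. 0 \<le> z n \<bullet> h" by simp
      qed simp
      then show ?thesis using True f0 by (simp add: cone_iff)
    next
      case False
      hence D: "norm (prj h l) > 0" by simp
      show ?thesis
      proof (rule ccontr)
        assume "l \<notin> ?C"
        hence "l \<bullet> h < f (norm (prj h l))" by (simp add: cone_iff)
        then obtain s where s: "0 \<le> s" "s < norm (prj h l)" "l \<bullet> h < f s" using LC[OF D] by blast
        have "\<forall>\<^sub>F n in sequentially. s < norm (prj h (z n))" using order_tendstoD(1)[OF pn s(2)] .
        hence "\<forall>\<^sub>F n in sequentially. f s \<le> z n \<bullet> h"
          by eventually_elim (use zn mono s(1) in \<open>meson less_imp_le order_trans\<close>)
        hence "f s \<le> l \<bullet> h" using tendsto_lowerbound[OF th] by simp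
        thus False using s by simp
      qed
    qed
  qed
qed

lemma mono_from_Q:
  fixes h e :: "'a::real_inner" and f :: "real \<Rightarrow> real"
  assumes Q: "\<And>t r. 0 \<le> t \<Longrightarrow> 0 \<le> r \<Longrightarrow> f t + f r \<le> max (f \<bar>t - r\<bar>) (f (t + r))"
    and cl: "closed (cone_f f h)" and unit: "norm h = 1" and e: "norm e = 1" "e \<bullet> h = 0"
    and f0: "f 0 = 0" and fnn: "\<And>d. d \<ge> 0 \<Longrightarrow> f d \<ge> 0"
    and yx: "0 \<le> y" "y \<le> x"
  shows "f y \<le> f x"
proof (rule ccontr)
  assume "\<not> ?thesis" hence fyx: "f x < f y" by simp
  hence yx': "y < x" using yx by (cases "y = x") auto
  define c where "c = f x"
  define L where "L = (\<lambda>d. c *\<^sub>R h + d *\<^sub>R e) -` cone_f f h"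
  have Lcl: "closed L" unfolding L_def
    by (rule continuous_closed_vimage[OF cl]) (intro continuous_intros)
  have Liff: "d \<in> L \<longleftrightarrow> f d \<le> c" if "0 \<le> d" for d
  proof -
    have "(d *\<^sub>R e) \<bullet> h = 0" using e by simp
    then show ?thesis using that e by (simp add: L_def cone_comb[OF unit])
  qed
  define A where "A = L \<inter> {0..y}"
  define B where "B = L \<inter> {y..x}"
  have c0: "0 \<le> c" using fnn yx by (simp add: c_def)
  have A0: "0 \<in> A" using Liff[of 0] f0 c0 yx by (simp add: A_def)
  have xB: "x \<in> B" using Liff[of x] yx by (simp add: B_def c_def)
  have yL: "y \<notin> L" using Liff[of y] yx fyx by (simp add: c_def)
  have Acl: "closed A" "bdd_above A" "A \<noteq> {}" using Lcl A0 by (auto simp: A_def intro: bdd_above_Icc[THEN bdd_above_mono])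
  have Bcl: "closed B" "bdd_below B" "B \<noteq> {}" using Lcl xB by (auto simp: B_def intro: bdd_below_Icc[THEN bdd_below_mono])
  define a where "a = Sup A"
  define b where "b = Inf B"
  have aA: "a \<in> A" using closed_contains_Sup[OF Acl(3) Acl(2) Acl(1)] a_def by simp
  have bB: "b \<in> B" using closed_contains_Inf[OF Bcl(3) Bcl(2) Bcl(1)] b_def by simp
  have ay: "0 \<le> a" "a < y" "a \<in> L" using aA yL by (auto simp: A_def) (metis order_le_less)
  have by': "y < b" "b \<le> x" "b \<in> L" using bB yL by (auto simp: B_def) (metis order_le_less)
  define m where "m = (a + b) / 2"
  define r where "r = (b - a) / 2"
  have m0: "0 \<le> m" "0 \<le> r" using ay by' by (simp_all add: m_def r_def)
  have "m - r = a" "m + r = b" by (simp_all add: m_def r_def field_simps)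
  hence "\<bar>m - r\<bar> = a" "m + r = b" using ay by simp_all
  hence "f m + f r \<le> max (f a) (f b)" using Q[OF m0] by simp
  moreover have "f a \<le> c" "f b \<le> c" using Liff ay by' by auto
  moreover have "f r \<ge> 0" using fnn m0 by simp
  ultimately have "f m \<le> c" by simp
  hence mL: "m \<in> L" using Liff m0 by simp
  have amb: "a < m" "m < b" using ay by' by (simp_all add: m_def)
  show False
  proof (cases "m \<le> y")
    case True
    hence "m \<in> A" using mL m0 by (simp add: A_def)
    hence "m \<le> a" unfolding a_def using Acl(2) by (rule cSup_upper)
    thus False using ay by' by (simp add: m_def)
  next
    case False
    hence "m \<in> B" using mL by' amb by (simp add: B_def)
    hence "b \<le> m" unfolding b_def using Bcl(2) by (rule cInf_lower)
    thus False using ay by' by (simp add: m_def)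
  qed
qed

lemma orth_exists:
  fixes S :: "'a::real_inner set"
  assumes "dim_ge TYPE('a) n" "finite S" "card S < n" "pairwise orthogonal S" "\<And>s. s \<in> S \<Longrightarrow> norm s = 1"
  shows "\<exists>e. norm e = 1 \<and> (\<forall>s\<in>S. e \<bullet> s = 0)"
proof -
  obtain B :: "'a set" where B: "independent B" "finite B" "card B = n" using assms(1) dim_ge_def by blast
  have "\<not> B \<subseteq> span S"
  proof
    assume "B \<subseteq> span S"
    then have "card B \<le> card S" using real_vector.independent_span_bound[OF assms(2) B(1)] by blast
    thus False using B(3) assms(3) by simp
  qed
  then obtain b where b: "b \<in> B" "b \<notin> span S" by blast
  define e' where "e' = b - (\<Sum>s\<in>S. (b \<bullet> s) *\<^sub>R s)"
  have sp: "(\<Sum>s\<in>S. (b \<bullet> s) *\<^sub>R s) \<in> span S" by (intro span_sum span_scale span_base)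
  have ne: "e' \<noteq> 0" using b sp by (auto simp: e'_def)
  have orth: "e' \<bullet> s0 = 0" if s0: "s0 \<in> S" for s0
  proof -
    have "(\<Sum>s\<in>S. (b \<bullet> s) *\<^sub>R s) \<bullet> s0 = (\<Sum>s\<in>S. (b \<bullet> s) * (s \<bullet> s0))" by (simp add: inner_sum_left)
    also have "... = (\<Sum>s\<in>S. if s = s0 then b \<bullet> s0 else 0)"
    proof (rule sum.cong)
      fix s assume s: "s \<in> S"
      show "(b \<bullet> s) * (s \<bullet> s0) = (if s = s0 then b \<bullet> s0 else 0)"
      proof (cases "s = s0")
        case True then show ?thesis using hh[OF assms(5)[OF s]] by simp
      next
        case False then show ?thesis using assms(4) s s0 by (simp add: pairwise_def orthogonal_def)
      qed
    qed simp
    also have "... = b \<bullet> s0" using s0 assms(2) by simp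
    finally show ?thesis by (simp add: e'_def inner_diff_left)
  qed
  show ?thesis
    by (rule exI[of _ "e' /\<^sub>R norm e'"]) (use ne orth in simp)
qed

lemma sq_mono:
  assumes sq: "square_superadditive f" and fnn: "\<And>d. d \<ge> 0 \<Longrightarrow> f d \<ge> 0"
    and fpos: "\<And>d. d > 0 \<Longrightarrow> f d > 0" and ab: "0 \<le> a" "a < b"
  shows "f a < f b"
proof -
  define c where "c = sqrt (b^2 - a^2)"
  have "a^2 < b^2" using ab by (simp add: power_strict_mono)
  hence c0: "c > 0" and "c^2 = b^2 - a^2" by (simp_all add: c_def)
  hence "sqrt (a^2 + c^2) = b" using ab by simp
  hence "f a + f c \<le> f b" using sq ab c0 by (metis less_imp_le square_superadditive_def)
  thus ?thesis using fpos[OF c0] by simp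
qed

lemma K_sq:
  fixes a u :: "'a::real_inner"
  assumes sq: "square_superadditive f" and mono: "\<And>a b. 0 \<le> a \<Longrightarrow> a \<le> b \<Longrightarrow> f a \<le> f b"
    and au: "a \<bullet> u \<ge> 0"
  shows "f (norm a) + f (norm u) \<le> f (norm (a + u))"
proof -
  have "(norm (a+u))^2 = (norm a)^2 + 2 * (a \<bullet> u) + (norm u)^2"
    by (simp add: power2_norm_eq_inner inner_add_left inner_add_right inner_commute)
  hence "sqrt ((norm a)^2 + (norm u)^2) \<le> norm (a + u)" using au by (intro real_le_lsqrt) auto
  hence "f (sqrt ((norm a)^2 + (norm u)^2)) \<le> f (norm (a + u))" by (intro mono) auto
  moreover have "f (norm a) + f (norm u) \<le> f (sqrt ((norm a)^2 + (norm u)^2))"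
    using sq by (simp add: square_superadditive_def)
  ultimately show ?thesis by simp
qed

lemma par2:
  fixes h a u :: "'a::real_inner"
  assumes dim: "dim (UNIV::'a set) = 2" and unit: "norm h = 1" and ah: "a \<bullet> h = 0" and uh: "u \<bullet> h = 0"
    and au: "a \<bullet> u \<ge> 0"
  shows "norm (a + u) = norm a + norm u"
proof (cases "a = 0")
  case True then show ?thesis by simp
next
  case False
  define k where "k = (u \<bullet> a) / (a \<bullet> a)"
  define u' where "u' = u - k *\<^sub>R a"
  have aa: "a \<bullet> a > 0" using False by simp
  have au': "a \<bullet> u' = 0" using aa by (simp add: u'_def k_def inner_diff_right inner_commute)
  have "h \<bullet> u = 0" "h \<bullet> a = 0" using ah uh by (simp_all add: inner_commute)
  hence hu': "h \<bullet> u' = 0" by (simp add: u'_def inner_diff_right)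
  have hh1: "h \<bullet> h = 1" using unit by (rule hh)
  have "u' = 0"
  proof (rule ccontr)
    assume u'0: "u' \<noteq> 0"
    define T where "T = {h, a, u'}"
    have h0: "h \<noteq> 0" using unit by auto
    have "pairwise orthogonal T"
      by (auto simp: T_def pairwise_def orthogonal_def inner_commute ah au' hu')
    moreover have "0 \<notin> T" using h0 False u'0 by (auto simp: T_def)
    ultimately have ind: "independent T" by (rule pairwise_orthogonal_independent)
    have "h \<noteq> a" "h \<noteq> u'" "a \<noteq> u'" using ah hh1 hu' au' aa by auto
    hence cT: "card T = 3" by (simp add: T_def)
    obtain B :: "'a set" where B: "independent B" "UNIV \<subseteq> span B" "card B = 2"
      using real_vector.basis_exists[of UNIV] dim by metis
    have fB: "finite B" using B(3) by (metis card.infinite zero_neq_numeral)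
    have "card T \<le> card B" using real_vector.independent_span_bound[OF fB ind] B(2) by blast
    thus False using cT B(3) by simp
  qed
  hence u: "u = k *\<^sub>R a" by (simp add: u'_def)
  have "a \<bullet> u = k * (a \<bullet> a)" by (simp add: u)
  hence k0: "k \<ge> 0" using au aa by (simp add: zero_le_mult_iff)
  have "a + u = (1 + k) *\<^sub>R a" by (simp add: u algebra_simps)
  hence "norm (a + u) = (1 + k) * norm a" using k0 by simp
  moreover have "norm u = k * norm a" using k0 u by simp
  ultimately show ?thesis by (simp add: algebra_simps)
qed

lemma closed_rel_iff:
  fixes h :: "'a::real_inner"
  shows "closed {(x, y). rel_f f h x y} \<longleftrightarrow> closed (cone_f f h)"
proof
  assume c: "closed {(x, y). rel_f f h x y}"
  have "cone_f f h = (\<lambda>v. (0, v)) -` {(x, y). rel_f f h x y}" by (auto simp: rel_f_def)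
  moreover have "closed ((\<lambda>v. (0::'a, v)) -` {(x, y). rel_f f h x y})"
    by (rule continuous_closed_vimage[OF c]) (intro continuous_intros)
  ultimately show "closed (cone_f f h)" by simp
next
  assume c: "closed (cone_f f h)"
  have "{(x, y). rel_f f h x y} = (\<lambda>z. snd z - fst z) -` cone_f f h" by (auto simp: rel_f_def)
  moreover have "closed ((\<lambda>z::'a\<times>'a. snd z - fst z) -` cone_f f h)"
    by (rule continuous_closed_vimage[OF c]) (intro continuous_intros)
  ultimately show "closed {(x, y). rel_f f h x y}" by simp
qed

theorem mainTheorem1:
  fixes h :: "'a::{real_inner, complete_space}"
    and f :: "real \<Rightarrow> real"
  assumes dim2: "dim_ge TYPE('a) 2"
    and unit: "norm h = 1"
    and f_nonneg: "\<forall>d\<ge>0. f d \<ge> 0"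
    and f_pos: "\<forall>d\<ge>0. f d > 0 \<longleftrightarrow> d > 0"
  shows "(dim_ge TYPE('a) 3 \<longrightarrow>
            (cc_sponge (rel_f f h) \<longleftrightarrow>
               closed {(x, y). rel_f f h x y} \<and> square_superadditive f))
       \<and> (dim (UNIV :: 'a set) = 2 \<and> closed {(x, y). rel_f f h x y} \<longrightarrow>
            (cc_sponge (rel_f f h) \<longleftrightarrow> superadditive f))"
proof -
  have f0: "f 0 = 0" using f_nonneg f_pos by force
  have fpos: "\<And>d. d > 0 \<Longrightarrow> f d > 0" using f_pos by auto
  have fnn: "\<And>d. d \<ge> 0 \<Longrightarrow> f d \<ge> 0" using f_nonneg by auto
  have hh1: "h \<bullet> h = 1" using unit by (rule hh)
  obtain e1 where e1: "norm e1 = 1" "e1 \<bullet> h = 0"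
    using orth_exists[OF dim2, of "{h}"] unit by (auto simp: pairwise_def)
  have partA: "dim_ge TYPE('a) 3 \<longrightarrow> (cc_sponge (rel_f f h) \<longleftrightarrow>
               closed {(x, y). rel_f f h x y} \<and> square_superadditive f)"
  proof
    assume d3: "dim_ge TYPE('a) 3"
    have he1: "h \<noteq> e1" using e1 hh1 by auto
    have "pairwise orthogonal {h, e1}" using e1 by (auto simp: pairwise_def orthogonal_def inner_commute)
    then obtain e2 where e2: "norm e2 = 1" "e2 \<bullet> h = 0" "e2 \<bullet> e1 = 0"
      using orth_exists[OF d3, of "{h, e1}"] unit e1 he1 by auto
    show "cc_sponge (rel_f f h) \<longleftrightarrow> closed {(x, y). rel_f f h x y} \<and> square_superadditive f"
    proof
      assume cc: "cc_sponge (rel_f f h)"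
      have sq: "square_superadditive f" unfolding square_superadditive_def
      proof (intro allI impI)
        fix a b :: real assume a: "0 \<le> a" and b: "0 \<le> b"
        have v: "(a *\<^sub>R e2) \<bullet> h = 0" using e2 by simp
        have "f (norm (a *\<^sub>R e2)) + f b \<le> max (f (norm (a *\<^sub>R e2 - b *\<^sub>R e1))) (f (norm (a *\<^sub>R e2 + b *\<^sub>R e1)))"
          by (rule nec_Q[OF cc unit e1 fpos v b])
        moreover have "norm (a *\<^sub>R e2 - b *\<^sub>R e1) = sqrt (a^2 + b^2)" "norm (a *\<^sub>R e2 + b *\<^sub>R e1) = sqrt (a^2 + b^2)"
        proof -
          have i: "e2 \<bullet> e2 = 1" "e1 \<bullet> e1 = 1" "e1 \<bullet> e2 = 0" using e1 e2 hh by (auto simp: inner_commute)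
          show "norm (a *\<^sub>R e2 - b *\<^sub>R e1) = sqrt (a^2 + b^2)" unfolding norm_eq_sqrt_inner
            using i e2(3) by (simp add: inner_diff_left inner_diff_right power2_eq_square)
          show "norm (a *\<^sub>R e2 + b *\<^sub>R e1) = sqrt (a^2 + b^2)" unfolding norm_eq_sqrt_inner
            using i e2(3) by (simp add: inner_add_left inner_add_right power2_eq_square)
        qed
        moreover have "norm (a *\<^sub>R e2) = a" using a e2 by simp
        ultimately show "f a + f b \<le> f (sqrt (a^2 + b^2))" by simp
      qed
      have smono: "f a < f b" if "0 \<le> a" "a < b" for a b
        using sq_mono[OF sq fnn fpos] that by blast
      have "closed (cone_f f h)"
        using nec_closed[OF cc unit e1 f0 _ smono] fnn by blast
      thus "closed {(x, y). rel_f f h x y} \<and> square_superadditive f" using sq closed_rel_iff by blast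
    next
      assume asm: "closed {(x, y). rel_f f h x y} \<and> square_superadditive f"
      hence sq: "square_superadditive f" and cl: "closed (cone_f f h)" using closed_rel_iff by blast+
      have mono: "f a \<le> f b" if "0 \<le> a" "a \<le> b" for a b
        using sq_mono[OF sq fnn fpos, of a b] that by (cases "a = b") auto
      show "cc_sponge (rel_f f h)"
      proof (rule suff[where h=h and f=f])
        show "norm h = 1" by (fact unit)
        show "f 0 = 0" by (fact f0)
        show "\<And>d. 0 < d \<Longrightarrow> 0 < f d" by (fact fpos)
        show "\<And>a b. 0 \<le> a \<Longrightarrow> a \<le> b \<Longrightarrow> f a \<le> f b" by (fact mono)
        show "closed (cone_f f h)" by (fact cl)
        fix a u :: 'a assume "0 \<le> a \<bullet> u"
        then show "f (norm a) + f (norm u) \<le> f (norm (a + u))" using K_sq[of f a u] sq mono by blast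
      qed
    qed
  qed
  have partB: "dim (UNIV :: 'a set) = 2 \<and> closed {(x, y). rel_f f h x y} \<longrightarrow>
            (cc_sponge (rel_f f h) \<longleftrightarrow> superadditive f)"
  proof
    assume asm: "dim (UNIV :: 'a set) = 2 \<and> closed {(x, y). rel_f f h x y}"
    hence dim: "dim (UNIV :: 'a set) = 2" and cl: "closed (cone_f f h)" using closed_rel_iff by blast+
    show "cc_sponge (rel_f f h) \<longleftrightarrow> superadditive f"
    proof
      assume cc: "cc_sponge (rel_f f h)"
      have Q: "f t + f r \<le> max (f \<bar>t - r\<bar>) (f (t + r))" if t: "0 \<le> t" and r: "0 \<le> r" for t r
      proof -
        have v: "(t *\<^sub>R e1) \<bullet> h = 0" using e1 by simp
        have "f (norm (t *\<^sub>R e1)) + f r \<le> max (f (norm (t *\<^sub>R e1 - r *\<^sub>R e1))) (f (norm (t *\<^sub>R e1 + r *\<^sub>R e1)))"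
          by (rule nec_Q[OF cc unit e1 fpos v r])
        moreover have "t *\<^sub>R e1 - r *\<^sub>R e1 = (t - r) *\<^sub>R e1" "t *\<^sub>R e1 + r *\<^sub>R e1 = (t + r) *\<^sub>R e1"
          by (simp_all add: algebra_simps)
        ultimately show ?thesis using e1 t r by simp
      qed
      have mono: "f a \<le> f b" if "0 \<le> a" "a \<le> b" for a b
        by (rule mono_from_Q[OF Q cl unit e1 f0 fnn that]) simp_all
      show "superadditive f" unfolding superadditive_def
      proof (intro allI impI)
        fix a b :: real assume a: "0 \<le> a" and b: "0 \<le> b"
        have "f \<bar>a - b\<bar> \<le> f (a + b)" using mono a b by simp
        thus "f a + f b \<le> f (a + b)" using Q[OF a b] by simp
      qed
    next
      assume sa: "superadditive f"
      have mono: "f a \<le> f b" if "0 \<le> a" "a \<le> b" for a b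
      proof -
        have ba: "0 \<le> b - a" using that by simp
        have "\<forall>x\<ge>0. \<forall>y\<ge>0. f x + f y \<le> f (x + y)" using sa by (simp add: superadditive_def)
        hence "f a + f (b - a) \<le> f (a + (b - a))" using that(1) ba by blast
        hence "f a + f (b - a) \<le> f b" by simp
        thus ?thesis using fnn[of "b - a"] that by simp
      qed
      show "cc_sponge (rel_f f h)"
      proof (rule suff[where h=h and f=f])
        show "norm h = 1" by (fact unit)
        show "f 0 = 0" by (fact f0)
        show "\<And>d. 0 < d \<Longrightarrow> 0 < f d" by (fact fpos)
        show "\<And>a b. 0 \<le> a \<Longrightarrow> a \<le> b \<Longrightarrow> f a \<le> f b" by (fact mono)
        show "closed (cone_f f h)" by (fact cl)
        fix a u :: 'a assume "a \<bullet> h = 0" "u \<bullet> h = 0" "0 \<le> a \<bullet> u"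
        hence "norm (a + u) = norm a + norm u" using par2[OF dim unit] by blast
        thus "f (norm a) + f (norm u) \<le> f (norm (a + u))" using sa by (simp add: superadditive_def)
      qed
    qed
  qed
  show ?thesis using partA partB by blast
qed

end
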